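(* Consider the non-contextual auction problem described in the context with $T\ge N\ge 3$. For any (possibly randomized) learning algorithm $\mathcal{A}$, there exist a sequence of bids $\{b_t\}_{t=1}^T\subset[0,1]^N$ and CTRs $\{\rho_i\}_{i=1}^N\subset[0,1]$ such that the expected regret of $\mathcal{A}$ is at least $\Omega(\sqrt{NT})$.
   Context: Notation: $\mathrm{smax}_i v_i$ is the second-largest entry of $v$; $\arg\max$, $\arg\mathrm{smax}$ the indices of the largest and second-largest entries, ties broken by a fixed deterministic rule. Non-contextual problem: a fixed set of $N$ ads with unknown constant CTRs $\rho_i\in[0,1]$. At each round $t\in[T]$ the learner chooses estimated CTRs $\tilde\rho_t\in[0,1]^N$ (based on past observations); bids $b_t\in[0,1]^N$ are given. The winner is $i_t=\arg\max_i b_{t,i}\tilde\rho_{t,i}$, the runner-up $j_t=\arg\mathrm{smax}_i b_{t,i}\tilde\rho_{t,i}$, the payment per click $d_t=b_{t,j_t}\tilde\rho_{t,j_t}/\tilde\rho_{t,i_t}$; the winner's ad is clicked with probability $\rho_{i_t}$. The learner observes $b_t$ and the click indicator $c_t\in\{0,1\}$ and receives $c_td_t$. Regret: $\mathrm{Reg}=\sum_{t=1}^T\mathrm{smax}_i b_{t,i}\rho_i-\sum_{t=1}^T c_td_t$. *)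

theory Defs
  imports "HOL-Probability.Probability"
begin

(* Vectors in [0,1]^N are functions nat => real, only indices i < N matter.
   Rounds are indexed 0..T-1.  b t i is the bid of ad i at round t. *)

(* Deterministic tie-breaking: argmax = smallest index attaining the maximum;
   arg smax = smallest index attaining the maximum over the remaining indices. *)
definition argmax_idx :: "nat \<Rightarrow> (nat \<Rightarrow> real) \<Rightarrow> nat" where
  "argmax_idx N v = (LEAST i. i < N \<and> (\<forall>j<N. v j \<le> v i))"

definition argsmax_idx :: "nat \<Rightarrow> (nat \<Rightarrow> real) \<Rightarrow> nat" where
  "argsmax_idx N v = (LEAST j. j < N \<and> j \<noteq> argmax_idx N v \<and>
      (\<forall>k<N. k \<noteq> argmax_idx N v \<longrightarrow> v k \<le> v j))"

definition smax :: "nat \<Rightarrow> (nat \<Rightarrow> real) \<Rightarrow> real" where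
  "smax N v = v (argsmax_idx N v)"

(* A deterministic learning policy: at round t it receives the bids b_1..b_t
   (bids of later rounds are masked) and the clicks c_1..c_{t-1}
   (later clicks masked), and outputs estimated CTRs. *)
type_synonym policy = "nat \<Rightarrow> (nat \<Rightarrow> nat \<Rightarrow> real) \<Rightarrow> (nat \<Rightarrow> bool) \<Rightarrow> nat \<Rightarrow> real"

definition est :: "policy \<Rightarrow> (nat \<Rightarrow> nat \<Rightarrow> real) \<Rightarrow> bool list \<Rightarrow> nat \<Rightarrow> nat \<Rightarrow> real" where
  "est \<pi> b c t = \<pi> t (\<lambda>s. if s \<le> t then b s else (\<lambda>_. 0)) (\<lambda>s. s < t \<and> s < length c \<and> c ! s)"

definition winner :: "nat \<Rightarrow> policy \<Rightarrow> (nat \<Rightarrow> nat \<Rightarrow> real) \<Rightarrow> bool list \<Rightarrow> nat \<Rightarrow> nat" where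
  "winner N \<pi> b c t = argmax_idx N (\<lambda>i. b t i * est \<pi> b c t i)"

definition runnerup :: "nat \<Rightarrow> policy \<Rightarrow> (nat \<Rightarrow> nat \<Rightarrow> real) \<Rightarrow> bool list \<Rightarrow> nat \<Rightarrow> nat" where
  "runnerup N \<pi> b c t = argsmax_idx N (\<lambda>i. b t i * est \<pi> b c t i)"

definition payment :: "nat \<Rightarrow> policy \<Rightarrow> (nat \<Rightarrow> nat \<Rightarrow> real) \<Rightarrow> bool list \<Rightarrow> nat \<Rightarrow> real" where
  "payment N \<pi> b c t =
     b t (runnerup N \<pi> b c t) * est \<pi> b c t (runnerup N \<pi> b c t) / est \<pi> b c t (winner N \<pi> b c t)"

definition click_prob :: "nat \<Rightarrow> nat \<Rightarrow> policy \<Rightarrow> (nat \<Rightarrow> nat \<Rightarrow> real) \<Rightarrow> (nat \<Rightarrow> real) \<Rightarrow> bool list \<Rightarrow> real" where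
  "click_prob N T \<pi> b \<rho> c =
     (\<Prod>t<T. if c ! t then \<rho> (winner N \<pi> b c t) else 1 - \<rho> (winner N \<pi> b c t))"

definition exp_revenue :: "nat \<Rightarrow> nat \<Rightarrow> policy \<Rightarrow> (nat \<Rightarrow> nat \<Rightarrow> real) \<Rightarrow> (nat \<Rightarrow> real) \<Rightarrow> real" where
  "exp_revenue N T \<pi> b \<rho> =
     (\<Sum>c\<in>{c :: bool list. length c = T}.
        click_prob N T \<pi> b \<rho> c * (\<Sum>t<T. if c ! t then payment N \<pi> b c t else 0))"

definition exp_regret :: "nat \<Rightarrow> nat \<Rightarrow> policy \<Rightarrow> (nat \<Rightarrow> nat \<Rightarrow> real) \<Rightarrow> (nat \<Rightarrow> real) \<Rightarrow> real" where
  "exp_regret N T \<pi> b \<rho> =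
     (\<Sum>t<T. smax N (\<lambda>i. b t i * \<rho> i)) - exp_revenue N T \<pi> b \<rho>"

end

theory Submission
  imports Defs
begin
abbreviation L :: "nat \<Rightarrow> bool list set" where "L n \<equiv> {c. length c = n}"

definition Pw :: "(bool list \<Rightarrow> real) \<Rightarrow> nat \<Rightarrow> bool list \<Rightarrow> real" where
  "Pw w n c = (\<Prod>t<n. if c!t then w (take t c) else 1 - w (take t c))"

lemma finite_L: "finite (L n)"
proof -
  have "L n = {xs. set xs \<subseteq> UNIV \<and> length xs = n}" by auto
  then show ?thesis using finite_lists_length_eq[of "UNIV::bool set" n] by simp
qed

lemma L_Suc: "L (Suc n) = (\<lambda>c. c@[True]) ` L n \<union> (\<lambda>c. c@[False]) ` L n"
proof
  show "L (Suc n) \<subseteq> (\<lambda>c. c@[True]) ` L n \<union> (\<lambda>c. c@[False]) ` L n"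
  proof
    fix c assume "c \<in> L (Suc n)"
    then have c: "length c = Suc n" by simp
    then have "c = butlast c @ [last c]" by (metis append_butlast_last_id list.size(3) nat.simps(3))
    moreover have "length (butlast c) = n" using c by simp
    ultimately show "c \<in> (\<lambda>c. c@[True]) ` L n \<union> (\<lambda>c. c@[False]) ` L n"
      by (cases "last c") (metis (mono_tags) UnI1 UnI2 image_eqI mem_Collect_eq)+
  qed
qed auto

lemma sum_L_Suc: "(\<Sum>c\<in>L (Suc n). F c) = (\<Sum>c\<in>L n. F (c@[True]) + F (c@[False]))"
proof -
  have d: "(\<lambda>c. c@[True]) ` L n \<inter> (\<lambda>c. c@[False]) ` L n = {}" by auto
  have i1: "inj_on (\<lambda>c. c@[True]) (L n)" by (auto simp: inj_on_def)
  have i2: "inj_on (\<lambda>c. c@[False]) (L n)" by (auto simp: inj_on_def)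
  have "(\<Sum>c\<in>L (Suc n). F c) = (\<Sum>c\<in>(\<lambda>c. c@[True]) ` L n. F c) + (\<Sum>c\<in>(\<lambda>c. c@[False]) ` L n. F c)"
    unfolding L_Suc by (rule sum.union_disjoint) (auto simp: finite_L d)
  also have "\<dots> = (\<Sum>c\<in>L n. F (c@[True])) + (\<Sum>c\<in>L n. F (c@[False]))"
    by (simp add: sum.reindex[OF i1] sum.reindex[OF i2])
  finally show ?thesis by (simp add: sum.distrib)
qed

lemma Pw_snoc: "length c = n \<Longrightarrow> Pw w (Suc n) (c@[x]) = Pw w n c * (if x then w c else 1 - w c)"
  unfolding Pw_def by (auto simp: nth_append intro!: prod.cong)

lemma Pw_marg: "m \<le> n \<Longrightarrow> (\<Sum>c\<in>L n. Pw w n c * h (take m c)) = (\<Sum>c\<in>L m. Pw w m c * h c)"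
proof (induction n)
  case 0 then show ?case by simp
next
  case (Suc n)
  show ?case
  proof (cases "m = Suc n")
    case True
    then show ?thesis by (intro sum.cong) auto
  next
    case False
    then have mn: "m \<le> n" using Suc.prems by simp
    have "(\<Sum>c\<in>L (Suc n). Pw w (Suc n) c * h (take m c))
        = (\<Sum>c\<in>L n. Pw w (Suc n) (c@[True]) * h (take m (c@[True])) + Pw w (Suc n) (c@[False]) * h (take m (c@[False])))"
      by (rule sum_L_Suc)
    also have "\<dots> = (\<Sum>c\<in>L n. Pw w n c * h (take m c))"
      using mn by (intro sum.cong) (auto simp: Pw_snoc algebra_simps)
    finally show ?thesis using Suc.IH[OF mn] by simp
  qed
qed

lemma Pw_step: "(\<Sum>c\<in>L (Suc t). Pw w (Suc t) c * G (take t c) (c!t))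
   = (\<Sum>c\<in>L t. Pw w t c * (w c * G c True + (1 - w c) * G c False))"
  unfolding sum_L_Suc by (intro sum.cong) (auto simp: Pw_snoc algebra_simps nth_append)

lemma Pw_tower:
  assumes "t < n"
  shows "(\<Sum>c\<in>L n. Pw w n c * G (take t c) (c!t))
   = (\<Sum>c\<in>L n. Pw w n c * (w (take t c) * G (take t c) True + (1 - w (take t c)) * G (take t c) False))"
proof -
  have "(\<Sum>c\<in>L n. Pw w n c * G (take t c) (c!t))
      = (\<Sum>c\<in>L n. Pw w n c * (\<lambda>d. G (take t d) (d!t)) (take (Suc t) c))"
    using assms by (intro sum.cong) auto
  also have "\<dots> = (\<Sum>c\<in>L (Suc t). Pw w (Suc t) c * G (take t c) (c!t))"
    using assms by (subst Pw_marg) auto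
  also have "\<dots> = (\<Sum>c\<in>L t. Pw w t c * (w c * G c True + (1 - w c) * G c False))"
    by (rule Pw_step)
  also have "\<dots> = (\<Sum>c\<in>L n. Pw w n c * (w (take t c) * G (take t c) True + (1 - w (take t c)) * G (take t c) False))"
    using assms by (subst Pw_marg[of t n]) auto
  finally show ?thesis .
qed

lemma Pw_sum1: "(\<Sum>c\<in>L n. Pw w n c) = 1"
proof -
  have "(\<Sum>c\<in>L n. Pw w n c) = (\<Sum>c\<in>L n. Pw w n c * (\<lambda>_. 1) (take 0 c))" by simp
  also have "\<dots> = (\<Sum>c\<in>L 0. Pw w 0 c * 1)" by (subst Pw_marg) auto
  also have "L 0 = {[]}" by auto
  finally show ?thesis by (simp add: Pw_def)
qed

lemma Pw_nonneg: "(\<And>d. 0 \<le> w d \<and> w d \<le> 1) \<Longrightarrow> 0 \<le> Pw w n c"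
  unfolding Pw_def by (intro prod_nonneg) auto

lemma Pw_pos: "(\<And>d. 0 < w d \<and> w d < 1) \<Longrightarrow> 0 < Pw w n c"
  unfolding Pw_def by (intro prod_pos) auto

lemma est_take: "est \<pi> b c t = est \<pi> b (take t c) t"
proof -
  have "(\<lambda>s. s < t \<and> s < length c \<and> c ! s) = (\<lambda>s. s < t \<and> s < length (take t c) \<and> take t c ! s)"
    by (auto simp: fun_eq_iff)
  then show ?thesis unfolding est_def by simp
qed

lemma winner_take: "winner N \<pi> b c t = winner N \<pi> b (take t c) t"
  unfolding winner_def by (subst est_take) simp

lemma click_prob_Pw:
  assumes "length c = T"
  shows "click_prob N T \<pi> b \<rho> c = Pw (\<lambda>d. \<rho> (winner N \<pi> b d (length d))) T c"
  unfolding click_prob_def Pw_def using assms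
  by (intro prod.cong refl) (simp add: winner_take[of N \<pi> b c])

lemma argmax_props:
  assumes "0 < N"
  shows "argmax_idx N v < N \<and> (\<forall>j<N. v j \<le> v (argmax_idx N v))"
proof -
  have "finite (v ` {..<N})" "v ` {..<N} \<noteq> {}" using assms by auto
  then have "Max (v ` {..<N}) \<in> v ` {..<N}" by (rule Max_in)
  then obtain i where i: "i < N" "v i = Max (v ` {..<N})" by auto
  have "\<forall>j<N. v j \<le> v i" using i by auto
  then have ex: "\<exists>i. i < N \<and> (\<forall>j<N. v j \<le> v i)" using i by blast
  show ?thesis unfolding argmax_idx_def by (rule LeastI_ex[OF ex])
qed

lemma argsmax_props:
  assumes "2 \<le> N"
  shows "argsmax_idx N v < N \<and> argsmax_idx N v \<noteq> argmax_idx N v \<and>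
         (\<forall>k<N. k \<noteq> argmax_idx N v \<longrightarrow> v k \<le> v (argsmax_idx N v))"
proof -
  define m where "m = argmax_idx N v"
  define S where "S = {k. k < N \<and> k \<noteq> m}"
  have fS: "finite S" unfolding S_def by auto
  have "(if m = 0 then 1 else 0) \<in> S" using assms unfolding S_def by auto
  then have "S \<noteq> {}" by blast
  then have "Max (v ` S) \<in> v ` S" using fS by (intro Max_in) auto
  then obtain i where i: "i \<in> S" "v i = Max (v ` S)" by auto
  have "\<forall>k<N. k \<noteq> m \<longrightarrow> v k \<le> v i" using i fS unfolding S_def by auto
  then have ex: "\<exists>i. i < N \<and> i \<noteq> m \<and> (\<forall>k<N. k \<noteq> m \<longrightarrow> v k \<le> v i)" using i unfolding S_def by blast
  show ?thesis unfolding argsmax_idx_def m_def[symmetric] by (rule LeastI_ex[OF ex])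
qed

lemma smax_ge:
  assumes "2 \<le> N" "a < N" "a' < N" "a \<noteq> a'" "x \<le> v a" "x \<le> v a'"
  shows "x \<le> smax N v"
proof -
  have P: "argsmax_idx N v < N \<and> argsmax_idx N v \<noteq> argmax_idx N v \<and>
         (\<forall>k<N. k \<noteq> argmax_idx N v \<longrightarrow> v k \<le> v (argsmax_idx N v))"
    using argsmax_props[OF assms(1)] .
  show ?thesis
  proof (cases "a = argmax_idx N v")
    case True
    then have "v a' \<le> v (argsmax_idx N v)" using P assms by auto
    then show ?thesis using assms unfolding smax_def by simp
  next
    case False
    then have "v a \<le> v (argsmax_idx N v)" using P assms by auto
    then show ?thesis using assms unfolding smax_def by simp
  qed
qed

definition b1 :: "nat \<Rightarrow> nat \<Rightarrow> real" where "b1 = (\<lambda>_ _. 1)"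

lemma payment_bounds:
  assumes "2 \<le> N" and est01: "\<And>t bs cs i. i < N \<Longrightarrow> 0 \<le> \<pi> t bs cs i \<and> \<pi> t bs cs i \<le> 1"
  shows "0 \<le> payment N \<pi> b1 c t \<and> payment N \<pi> b1 c t \<le> 1"
proof -
  define v where "v = (\<lambda>i. b1 t i * est \<pi> b1 c t i)"
  define i where "i = winner N \<pi> b1 c t"
  define j where "j = runnerup N \<pi> b1 c t"
  have iv: "i = argmax_idx N v" unfolding i_def winner_def v_def by simp
  have jv: "j = argsmax_idx N v" unfolding j_def runnerup_def v_def by simp
  have A: "i < N \<and> (\<forall>k<N. v k \<le> v i)" using argmax_props[of N v] assms(1) iv by simp
  have B: "j < N" using argsmax_props[OF assms(1), of v] jv by simp
  have e: "\<And>k. k < N \<Longrightarrow> 0 \<le> est \<pi> b1 c t k \<and> est \<pi> b1 c t k \<le> 1"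
    unfolding est_def using est01 by blast
  have le: "est \<pi> b1 c t j \<le> est \<pi> b1 c t i" using A B unfolding v_def b1_def by auto
  have p: "payment N \<pi> b1 c t = est \<pi> b1 c t j / est \<pi> b1 c t i"
    unfolding payment_def i_def j_def b1_def by simp
  show ?thesis unfolding p using le e[OF B] e[of i] A
    by (cases "est \<pi> b1 c t i = 0") (auto simp: divide_le_eq_1)
qed

definition inH :: "nat \<Rightarrow> nat \<Rightarrow> nat \<Rightarrow> bool" where
  "inH N k i = (i = k \<or> i = Suc k mod N)"

definition rhoK :: "nat \<Rightarrow> real \<Rightarrow> nat \<Rightarrow> nat \<Rightarrow> real" where
  "rhoK N e k i = 1/2 + (if inH N k i then e else 0)"

lemma Suc_mod_cases: "x < N \<Longrightarrow> Suc x mod N = (if Suc x = N then 0 else Suc x)"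
  by (auto simp: Suc_lessI)
lemma Suc_mod_inj: "x < N \<Longrightarrow> y < N \<Longrightarrow> Suc x mod N = Suc y mod N \<Longrightarrow> x = y"
  by (simp add: Suc_mod_cases split: if_splits)
lemma Suc_mod_neq: assumes "k < N" "2 \<le> N" shows "Suc k mod N \<noteq> k"
  using assms by (simp add: Suc_mod_cases)

lemma inH_count: "(\<Sum>k<N. if inH N k i then 1 else 0::real) \<le> 2"
proof -
  have c1: "card ({..<N} \<inter> {k. Suc k mod N = i}) \<le> Suc 0"
  proof (subst card_le_Suc0_iff_eq)
    show "finite ({..<N} \<inter> {k. Suc k mod N = i})" by simp
    show "\<forall>x\<in>{..<N} \<inter> {k. Suc k mod N = i}. \<forall>y\<in>{..<N} \<inter> {k. Suc k mod N = i}. x = y"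
      using Suc_mod_inj by blast
  qed
  have A: "(\<Sum>k<N. if inH N k i then 1 else 0::real) \<le> (\<Sum>k<N. (if k = i then 1 else 0) + (if Suc k mod N = i then 1 else 0))"
    by (intro sum_mono) (auto simp: inH_def)
  have B: "(\<Sum>k<N. (if k = i then 1 else 0) + (if Suc k mod N = i then 1 else 0::real)) = (\<Sum>k<N. if k = i then 1 else 0) + (\<Sum>k<N. if Suc k mod N = i then 1 else 0)"
    by (rule sum.distrib)
  have C: "(\<Sum>k<N. if k = i then 1 else 0::real) \<le> 1"
    by (simp add: sum.delta)
  have D: "(\<Sum>k<N. if Suc k mod N = i then 1 else 0::real) = real (card ({..<N} \<inter> {k. Suc k mod N = i}))"
    by (simp add: sum.If_cases)
  have E: "real (card ({..<N} \<inter> {k. Suc k mod N = i})) \<le> 1" using c1 by simp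
  show ?thesis using A B C D E by linarith
qed

lemma aux_half: "(\<Sum>t<n. 1/2 + (if P t then e else 0::real)) = real n/2 + e * (\<Sum>t<n. if P t then 1 else 0)"
  by (induct n) (auto simp: algebra_simps)

locale det =
  fixes N T :: nat and \<pi> :: policy and e :: real
  assumes N3: "3 \<le> N" and NT: "N \<le> T"
    and est01: "\<And>t bs cs i. i < N \<Longrightarrow> 0 \<le> \<pi> t bs cs i \<and> \<pi> t bs cs i \<le> 1"
    and e0: "0 < e" and e1: "e \<le> 1/48"
begin

definition W where "W d = winner N \<pi> b1 d (length d)"
definition wk where "wk k d = rhoK N e k (W d)"
definition q where "q k c = Pw (wk k) T c"
definition p where "p c = Pw (\<lambda>_. 1/2) T c"
definition nk where "nk k c = (\<Sum>t<T. if inH N k (W (take t c)) then 1 else 0::real)"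

lemma wk_bounds: "0 < wk k d \<and> wk k d < 1"
  using e0 e1 unfolding wk_def rhoK_def by auto

lemma q_nonneg: "0 \<le> q k c" unfolding q_def using wk_bounds by (intro Pw_nonneg) (auto simp: less_imp_le)
lemma q_pos: "0 < q k c" unfolding q_def using wk_bounds by (intro Pw_pos) auto
lemma p_pos: "0 < p c" unfolding p_def by (intro Pw_pos) auto
lemma p_eq: "p c = (1/2)^T"
proof -
  have eq: "(\<Prod>t<T. if c!t then 1/2 else 1 - 1/2::real) = (\<Prod>t<T. 1/2)" by (intro prod.cong) auto
  show ?thesis unfolding p_def Pw_def eq by simp
qed
lemma q_sum: "(\<Sum>c\<in>L T. q k c) = 1" unfolding q_def by (rule Pw_sum1)
lemma p_sum: "(\<Sum>c\<in>L T. p c) = 1" unfolding p_def by (rule Pw_sum1)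

lemma nk_bounds: "0 \<le> nk k c \<and> nk k c \<le> T"
proof -
  have "nk k c \<le> (\<Sum>t<T. 1)" unfolding nk_def by (intro sum_mono) auto
  then show ?thesis unfolding nk_def by (auto intro: sum_nonneg)
qed

lemma click_prob_q: "c \<in> L T \<Longrightarrow> click_prob N T \<pi> b1 (rhoK N e k) c = q k c"
proof -
  have "wk k = (\<lambda>d. rhoK N e k (winner N \<pi> b1 d (length d)))" by (simp add: fun_eq_iff wk_def W_def)
  then show "c \<in> L T \<Longrightarrow> click_prob N T \<pi> b1 (rhoK N e k) c = q k c" by (simp add: click_prob_Pw q_def)
qed

lemma winner_W: "c \<in> L T \<Longrightarrow> t < T \<Longrightarrow> winner N \<pi> b1 c t = W (take t c)"
  unfolding W_def by (simp add: winner_take[of N \<pi> b1 c t])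

lemma revenue_bound:
  "exp_revenue N T \<pi> b1 (rhoK N e k) \<le> T/2 + e * (\<Sum>c\<in>L T. q k c * nk k c)"
  "0 \<le> exp_revenue N T \<pi> b1 (rhoK N e k)"
proof -
  have pb: "\<And>c t. 0 \<le> payment N \<pi> b1 c t \<and> payment N \<pi> b1 c t \<le> 1"
    using N3 est01 by (intro payment_bounds) auto
  have rev_eq: "exp_revenue N T \<pi> b1 (rhoK N e k) = (\<Sum>c\<in>L T. q k c * (\<Sum>t<T. if c ! t then payment N \<pi> b1 c t else 0))"
    unfolding exp_revenue_def by (intro sum.cong) (auto simp: click_prob_q)
  note rev_eq
  also have "\<dots> \<le> (\<Sum>c\<in>L T. q k c * (\<Sum>t<T. (\<lambda>d x. if x then 1 else 0::real) (take t c) (c!t)))"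
    using pb q_nonneg by (intro sum_mono mult_left_mono) auto
  also have "\<dots> = (\<Sum>t<T. (\<Sum>c\<in>L T. q k c * (\<lambda>d x. if x then 1 else 0::real) (take t c) (c!t)))"
    by (simp add: sum_distrib_left sum.swap[of _ "L T"])
  also have "\<dots> = (\<Sum>t<T. (\<Sum>c\<in>L T. q k c * wk k (take t c)))"
  proof (rule sum.cong[OF refl])
    fix t assume "t \<in> {..<T}"
    then show "(\<Sum>c\<in>L T. q k c * (\<lambda>d x. if x then 1 else 0::real) (take t c) (c!t)) = (\<Sum>c\<in>L T. q k c * wk k (take t c))"
      unfolding q_def using Pw_tower[of t T "wk k" "\<lambda>d x. if x then 1 else 0::real"] by simp
  qed
  also have "\<dots> = (\<Sum>c\<in>L T. q k c * (\<Sum>t<T. 1/2 + (if inH N k (W (take t c)) then e else 0)))"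
    by (simp add: sum_distrib_left sum.swap[of _ "L T"] wk_def rhoK_def)
  also have "\<dots> = (\<Sum>c\<in>L T. q k c * (T/2 + e * nk k c))"
    unfolding nk_def by (simp add: aux_half)
  also have "\<dots> = T/2 * (\<Sum>c\<in>L T. q k c) + e * (\<Sum>c\<in>L T. q k c * nk k c)"
    by (simp add: algebra_simps sum.distrib sum_distrib_left)
  finally show "exp_revenue N T \<pi> b1 (rhoK N e k) \<le> T/2 + e * (\<Sum>c\<in>L T. q k c * nk k c)"
    by (simp add: q_sum)
  have "0 \<le> (\<Sum>c\<in>L T. q k c * (\<Sum>t<T. if c ! t then payment N \<pi> b1 c t else 0))"
    using pb q_nonneg by (intro sum_nonneg mult_nonneg_nonneg) auto
  then show "0 \<le> exp_revenue N T \<pi> b1 (rhoK N e k)"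
    unfolding rev_eq .
qed

lemma rhoK_le1: "rhoK N e k i \<le> 1" using e1 by (simp add: rhoK_def)
lemma rhoK_ge0: "0 \<le> rhoK N e k i" using e0 by (simp add: rhoK_def)

lemma smax_bounds:
  assumes "k < N"
  shows "1/2 + e \<le> smax N (\<lambda>i. b1 t i * rhoK N e k i)" "smax N (\<lambda>i. b1 t i * rhoK N e k i) \<le> 1"
proof -
  have N2: "2 \<le> N" using N3 by simp
  have a1: "Suc k mod N < N" using assms by simp
  have a2: "k \<noteq> Suc k mod N" using Suc_mod_neq[OF assms N2] by simp
  have v1: "1/2 + e \<le> b1 t k * rhoK N e k k" by (simp add: b1_def rhoK_def inH_def)
  have v2: "1/2 + e \<le> b1 t (Suc k mod N) * rhoK N e k (Suc k mod N)" by (simp add: b1_def rhoK_def inH_def)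
  show "1/2 + e \<le> smax N (\<lambda>i. b1 t i * rhoK N e k i)"
    by (rule smax_ge[OF N2 assms a1 a2 v1 v2])
  show "smax N (\<lambda>i. b1 t i * rhoK N e k i) \<le> 1"
    unfolding smax_def b1_def by (simp only: mult_1 rhoK_le1)
qed

lemma regret_lower:
  assumes "k < N"
  shows "e * (T - (\<Sum>c\<in>L T. q k c * nk k c)) \<le> exp_regret N T \<pi> b1 (rhoK N e k)"
proof -
  have "(\<Sum>t<T. 1/2 + e) \<le> (\<Sum>t<T. smax N (\<lambda>i. b1 t i * rhoK N e k i))"
    by (intro sum_mono smax_bounds(1)[OF assms])
  then have S: "T * (1/2 + e) \<le> (\<Sum>t<T. smax N (\<lambda>i. b1 t i * rhoK N e k i))" by simp
  have R: "exp_revenue N T \<pi> b1 (rhoK N e k) \<le> T/2 + e * (\<Sum>c\<in>L T. q k c * nk k c)"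
    by (rule revenue_bound(1))
  have E: "e * (T - (\<Sum>c\<in>L T. q k c * nk k c)) = T * (1/2 + e) - (T/2 + e * (\<Sum>c\<in>L T. q k c * nk k c))"
    by (simp add: algebra_simps)
  show ?thesis unfolding exp_regret_def E using S R by linarith
qed

lemma regret_abs: "k < N \<Longrightarrow> \<bar>exp_regret N T \<pi> b1 (rhoK N e k)\<bar> \<le> T"
proof -
  assume k: "k < N"
  have "(\<Sum>t<T. smax N (\<lambda>i. b1 t i * rhoK N e k i)) \<le> (\<Sum>t<T. 1)"
    by (intro sum_mono smax_bounds(2)[OF k])
  then have "(\<Sum>t<T. smax N (\<lambda>i. b1 t i * rhoK N e k i)) \<le> T" by simp
  moreover have "0 \<le> (\<Sum>t<T. smax N (\<lambda>i. b1 t i * rhoK N e k i))"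
  proof (intro sum_nonneg)
    fix t show "0 \<le> smax N (\<lambda>i. b1 t i * rhoK N e k i)" using smax_bounds(1)[OF k, of t] e0 by linarith
  qed
  moreover have "exp_revenue N T \<pi> b1 (rhoK N e k) \<le> T"
  proof -
    have "(\<Sum>c\<in>L T. q k c * nk k c) \<le> (\<Sum>c\<in>L T. q k c * T)"
      using nk_bounds q_nonneg by (intro sum_mono mult_left_mono) auto
    then have "(\<Sum>c\<in>L T. q k c * nk k c) \<le> T" by (simp add: sum_distrib_right[symmetric] q_sum)
    moreover have "0 \<le> (\<Sum>c\<in>L T. q k c * nk k c)"
      using nk_bounds q_nonneg by (intro sum_nonneg mult_nonneg_nonneg) auto
    ultimately have "e * (\<Sum>c\<in>L T. q k c * nk k c) \<le> 1/48 * T"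
      using e1 e0 by (intro mult_mono) auto
    then show ?thesis using revenue_bound(1)[of k] by linarith
  qed
  ultimately show ?thesis using revenue_bound(2)[of k] unfolding exp_regret_def abs_le_iff by linarith
qed

end

lemma exp_half_ln: "0 < y \<Longrightarrow> exp (ln y / 2) = sqrt y"
proof -
  assume y: "0 < y"
  then have h: "ln y / 2 = ln (sqrt y)" by (simp add: ln_sqrt)
  have "exp (ln (sqrt y)) = sqrt y" using y by simp
  then show ?thesis unfolding h .
qed

lemma half_le: "2 * x \<le> y \<Longrightarrow> x \<le> y / (2::real)" by simp

lemma amgm_abs: fixes q p \<mu> :: real assumes "0 \<le> q" "0 \<le> p" "0 < \<mu>"
  shows "\<bar>q - p\<bar> \<le> (\<mu> * (sqrt q - sqrt p)^2 + 2 * (q + p) / \<mu>) / 2"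
proof -
  define a where "a = sqrt q"
  define b where "b = sqrt p"
  have a0: "0 \<le> a" "0 \<le> b" unfolding a_def b_def using assms by auto
  have qa: "q = a^2" "p = b^2" unfolding a_def b_def using real_sqrt_pow2[OF assms(1)] real_sqrt_pow2[OF assms(2)] by auto
  define ua where "ua = \<bar>a - b\<bar>"
  define vb where "vb = a + b"
  have "q - p = (a - b) * (a + b)" unfolding qa by (simp add: power2_eq_square algebra_simps)
  then have uv: "\<bar>q - p\<bar> = ua * vb" unfolding ua_def vb_def using a0 by (simp add: abs_mult)
  have "2*(q+p) - vb^2 = (a-b)^2" unfolding qa vb_def by (simp add: power2_eq_square algebra_simps)
  moreover have "0 \<le> (a-b)^2" by simp
  ultimately have vv: "vb^2 \<le> 2*(q+p)" by linarith
  have "\<mu>*ua^2 + vb^2/\<mu> - 2*(ua* vb) = (\<mu>*ua - vb)^2/\<mu>" using assms(3)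
    by (simp add: field_simps power2_eq_square)
  moreover have "0 \<le> (\<mu>*ua - vb)^2/\<mu>" using assms(3) by simp
  ultimately have m: "2*(ua* vb) \<le> \<mu>*ua^2 + vb^2/\<mu>" by linarith
  have v2: "vb^2/\<mu> \<le> 2*(q+p)/\<mu>" using vv assms(3) by (simp add: divide_right_mono)
  have u2: "\<mu> * ua^2 = \<mu> * (sqrt q - sqrt p)^2" unfolding ua_def a_def b_def by simp
  have "\<bar>q - p\<bar> \<le> (\<mu>*ua^2 + vb^2/\<mu>)/2" unfolding uv by (rule half_le[OF m])
  also have "\<dots> \<le> (\<mu> * (sqrt q - sqrt p)^2 + 2 * (q + p) / \<mu>) / 2"
    unfolding u2 by (rule divide_right_mono[OF add_mono[OF order.refl v2]]) simp
  finally show ?thesis .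
qed

context det
begin

definition ff where "ff k c t = (if c!t then wk k (take t c) else 1 - wk k (take t c))"
definition Lam where "Lam k c = (\<Sum>t<T. ln (2 * ff k c t))"
definition kap where "kap = - (ln (1 + 2*e) + ln (1 - 2*e)) / 2"

lemma ff_pos: "0 < ff k c t" unfolding ff_def using wk_bounds[of k] by auto

lemma Lam_eq: "Lam k c = ln (q k c / p c)"
proof -
  have "q k c / p c = 2^T * q k c" by (simp add: p_eq power_one_over)
  also have "\<dots> = (\<Prod>t<T. 2 * ff k c t)" by (simp add: prod.distrib q_def Pw_def ff_def)
  moreover have nz: "2 * ff k c t \<noteq> 0" for t using ff_pos[of k c t] by simp
  moreover have "ln (\<Prod>t<T. 2 * ff k c t) = (\<Sum>t<T. ln (2 * ff k c t))"
    using nz by (intro ln_prod) auto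
  ultimately have "ln (q k c / p c) = (\<Sum>t<T. ln (2 * ff k c t))" by simp
  then show ?thesis unfolding Lam_def by simp
qed

lemma ElogLR: "(\<Sum>c\<in>L T. p c * Lam k c) = - kap * (\<Sum>c\<in>L T. p c * nk k c)"
proof -
  define K where "K = (ln (1 + 2*e) + ln (1 - 2*e)) / 2"
  define G where "G = (\<lambda>d x. if inH N k (W d) then (if x then ln (1 + 2*e) else ln (1 - 2*e)) else (0::real))"
  have trm: "ln (2 * ff k c t) = G (take t c) (c!t)" for c t
    unfolding G_def ff_def wk_def rhoK_def by (auto simp: algebra_simps)
  have "(\<Sum>c\<in>L T. p c * Lam k c) = (\<Sum>t<T. \<Sum>c\<in>L T. Pw (\<lambda>_. 1/2) T c * G (take t c) (c!t))"
    unfolding Lam_def trm p_def by (simp add: sum_distrib_left sum.swap[of _ "L T"])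
  also have "\<dots> = (\<Sum>t<T. \<Sum>c\<in>L T. Pw (\<lambda>_. 1/2) T c * (1/2 * G (take t c) True + (1 - 1/2) * G (take t c) False))"
  proof (rule sum.cong[OF refl])
    fix t assume "t \<in> {..<T}"
    then show "(\<Sum>c\<in>L T. Pw (\<lambda>_. 1/2) T c * G (take t c) (c!t)) = (\<Sum>c\<in>L T. Pw (\<lambda>_. 1/2) T c * (1/2 * G (take t c) True + (1 - 1/2) * G (take t c) False))"
      using Pw_tower[of t T "\<lambda>_. 1/2" G] by simp
  qed
  also have "\<dots> = (\<Sum>t<T. \<Sum>c\<in>L T. K * (p c * (if inH N k (W (take t c)) then 1 else 0)))"
    unfolding p_def G_def K_def by (intro sum.cong refl) (auto simp: algebra_simps)
  also have "\<dots> = K * (\<Sum>t<T. \<Sum>c\<in>L T. p c * (if inH N k (W (take t c)) then 1 else 0))"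
    by (simp add: sum_distrib_left)
  also have "(\<Sum>t<T. \<Sum>c\<in>L T. p c * (if inH N k (W (take t c)) then 1 else 0)) = (\<Sum>c\<in>L T. \<Sum>t<T. p c * (if inH N k (W (take t c)) then 1 else 0))"
    by (rule sum.swap)
  also have "\<dots> = (\<Sum>c\<in>L T. p c * nk k c)"
    unfolding nk_def by (simp add: sum_distrib_left)
  finally have F: "(\<Sum>c\<in>L T. p c * Lam k c) = K * (\<Sum>c\<in>L T. p c * nk k c)" .
  have "- kap = K" unfolding kap_def K_def by linarith
  then show ?thesis using F by simp
qed

lemma L_ne: "L T \<noteq> {}"
proof -
  have "replicate T True \<in> L T" by simp
  then show ?thesis by blast
qed

lemma BC_lower: "exp (- kap * (\<Sum>c\<in>L T. p c * nk k c) / 2) \<le> (\<Sum>c\<in>L T. sqrt (p c) * sqrt (q k c))"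
proof -
  have J: "exp (\<Sum>c\<in>L T. p c *\<^sub>R (Lam k c / 2)) \<le> (\<Sum>c\<in>L T. p c * exp (Lam k c / 2))"
    using p_pos by (intro convex_on_sum[OF finite_L L_ne exp_convex p_sum]) (auto simp: less_imp_le)
  have "(\<Sum>c\<in>L T. p c *\<^sub>R (Lam k c / 2)) = (\<Sum>c\<in>L T. p c * Lam k c) / 2"
    by (simp add: sum_divide_distrib)
  also have "\<dots> = - kap * (\<Sum>c\<in>L T. p c * nk k c) / 2" by (simp add: ElogLR)
  finally have J1: "(\<Sum>c\<in>L T. p c *\<^sub>R (Lam k c / 2)) = - kap * (\<Sum>c\<in>L T. p c * nk k c) / 2" .
  have "p c * exp (Lam k c / 2) = sqrt (p c) * sqrt (q k c)" for c
  proof -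
    have pq: "0 < q k c / p c" using p_pos q_pos by simp
    have "p c * exp (Lam k c / 2) = p c * sqrt (q k c / p c)"
      unfolding Lam_eq using exp_half_ln[OF pq] by simp
    also have "\<dots> = sqrt (p c) * sqrt (p c) * (sqrt (q k c) / sqrt (p c))"
      using p_pos[of c] by (simp add: real_sqrt_divide)
    also have "\<dots> = sqrt (p c) * sqrt (q k c)"
      using p_pos[of c] by (simp add: field_simps)
    finally show ?thesis .
  qed
  then show ?thesis using J J1 by simp
qed

lemma hell: "(\<Sum>c\<in>L T. (sqrt (q k c) - sqrt (p c))^2) \<le> kap * (\<Sum>c\<in>L T. p c * nk k c)"
proof -
  have "(\<Sum>c\<in>L T. (sqrt (q k c) - sqrt (p c))^2) = (\<Sum>c\<in>L T. q k c + p c - 2 * (sqrt (p c) * sqrt (q k c)))"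
  proof (rule sum.cong[OF refl])
    fix c
    show "(sqrt (q k c) - sqrt (p c))^2 = q k c + p c - 2 * (sqrt (p c) * sqrt (q k c))"
      using q_nonneg[of k c] p_pos[of c] by (simp add: power2_diff algebra_simps)
  qed
  also have "\<dots> = 2 - 2 * (\<Sum>c\<in>L T. sqrt (p c) * sqrt (q k c))"
    by (simp add: sum.distrib sum_subtractf sum_distrib_left q_sum p_sum)
  finally have H: "(\<Sum>c\<in>L T. (sqrt (q k c) - sqrt (p c))^2) = 2 - 2 * (\<Sum>c\<in>L T. sqrt (p c) * sqrt (q k c))" .
  have "1 + (- kap * (\<Sum>c\<in>L T. p c * nk k c) / 2) \<le> exp (- kap * (\<Sum>c\<in>L T. p c * nk k c) / 2)"
    by (rule exp_ge_add_one_self)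
  then show ?thesis using H BC_lower[of k] by linarith
qed

lemma Eq_bound:
  assumes "0 < \<mu>"
  shows "(\<Sum>c\<in>L T. q k c * nk k c) \<le> (\<Sum>c\<in>L T. p c * nk k c) + T * (\<mu> * kap * (\<Sum>c\<in>L T. p c * nk k c) + 4/\<mu>) / 2"
proof -
  define E where "E = (\<Sum>c\<in>L T. p c * nk k c)"
  define H where "H = (\<Sum>c\<in>L T. (sqrt (q k c) - sqrt (p c))^2)"
  define D where "D = (\<Sum>c\<in>L T. \<bar>q k c - p c\<bar>)"
  have s1: "(\<Sum>c\<in>L T. q k c * nk k c) - E = (\<Sum>c\<in>L T. (q k c - p c) * nk k c)"
    unfolding E_def by (simp add: sum_subtractf algebra_simps)
  have s2: "(\<Sum>c\<in>L T. (q k c - p c) * nk k c) \<le> (\<Sum>c\<in>L T. \<bar>q k c - p c\<bar> * T)"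
  proof (rule sum_mono)
    fix c
    have "(q k c - p c) * nk k c \<le> \<bar>q k c - p c\<bar> * nk k c"
      using nk_bounds[of k c] by (intro mult_right_mono) auto
    also have "\<dots> \<le> \<bar>q k c - p c\<bar> * T"
      using nk_bounds[of k c] by (intro mult_left_mono) auto
    finally show "(q k c - p c) * nk k c \<le> \<bar>q k c - p c\<bar> * T" .
  qed
  have s3: "(\<Sum>c\<in>L T. \<bar>q k c - p c\<bar> * T) = T * D" unfolding D_def by (simp add: sum_distrib_left mult.commute)
  have s4: "D \<le> (\<Sum>c\<in>L T. (\<mu> * (sqrt (q k c) - sqrt (p c))^2 + 2 * (q k c + p c) / \<mu>) / 2)"
    unfolding D_def using q_nonneg p_pos assms by (intro sum_mono amgm_abs) (auto simp: less_imp_le)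
  have s5: "(\<Sum>c\<in>L T. (\<mu> * (sqrt (q k c) - sqrt (p c))^2 + 2 * (q k c + p c) / \<mu>) / 2)
      = (\<Sum>c\<in>L T. \<mu>/2 * (sqrt (q k c) - sqrt (p c))^2 + 1/\<mu> * q k c + 1/\<mu> * p c)"
    using assms by (intro sum.cong refl) (simp add: field_simps)
  have s6: "(\<Sum>c\<in>L T. \<mu>/2 * (sqrt (q k c) - sqrt (p c))^2 + 1/\<mu> * q k c + 1/\<mu> * p c) = \<mu>/2 * H + 1/\<mu> * (\<Sum>c\<in>L T. q k c) + 1/\<mu> * (\<Sum>c\<in>L T. p c)"
    unfolding H_def by (simp add: sum.distrib sum_distrib_left)
  have s7: "1/\<mu> * (\<Sum>c\<in>L T. q k c) + 1/\<mu> * (\<Sum>c\<in>L T. p c) = 2/\<mu>" by (simp add: q_sum p_sum)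
  have s8: "\<mu>/2 * H \<le> \<mu>/2 * (kap * E)" unfolding H_def E_def using hell[of k] assms by simp
  have "D \<le> \<mu>/2 * (kap * E) + 2/\<mu>" using s4 s5 s6 s7 s8 by linarith
  then have "T * D \<le> T * (\<mu>/2 * (kap * E) + 2/\<mu>)" by (intro mult_left_mono) auto
  also have "T * (\<mu>/2 * (kap * E) + 2/\<mu>) = T * (\<mu> * kap * E + 4/\<mu>) / 2" by (simp add: field_simps)
  finally have "T * D \<le> T * (\<mu> * kap * E + 4/\<mu>) / 2" .
  then show ?thesis using s1 s2 s3 unfolding E_def by linarith
qed

lemma kap_le: "kap \<le> 6 * e^2"
proof -
  have "2*e - (2*e)^2 \<le> ln (1 + 2*e)" using e0 e1 by (intro ln_one_plus_pos_lower_bound) auto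
  moreover have "- (2*e) - 2 * (2*e)^2 \<le> ln (1 - 2*e)" using e0 e1 by (intro ln_one_minus_pos_lower_bound) auto
  ultimately show ?thesis unfolding kap_def by (simp add: power2_eq_square)
qed

lemma sumE0: "(\<Sum>k<N. \<Sum>c\<in>L T. p c * nk k c) \<le> 2 * real T"
proof -
  have inner: "(\<Sum>k<N. nk k c) \<le> 2 * real T" for c
  proof -
    have "(\<Sum>k<N. nk k c) = (\<Sum>k<N. \<Sum>t<T. if inH N k (W (take t c)) then 1 else 0)" unfolding nk_def by simp
    also have "\<dots> = (\<Sum>t<T. \<Sum>k<N. if inH N k (W (take t c)) then 1 else 0)" by (rule sum.swap)
    also have "\<dots> \<le> (\<Sum>t<T. 2)" by (intro sum_mono inH_count)
    finally show ?thesis by simp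
  qed
  have "(\<Sum>k<N. \<Sum>c\<in>L T. p c * nk k c) = (\<Sum>c\<in>L T. \<Sum>k<N. p c * nk k c)" by (rule sum.swap)
  also have "\<dots> = (\<Sum>c\<in>L T. p c * (\<Sum>k<N. nk k c))" by (simp add: sum_distrib_left)
  also have "\<dots> \<le> (\<Sum>c\<in>L T. p c * (2 * real T))"
    using p_pos inner by (intro sum_mono mult_left_mono) (auto simp: less_imp_le)
  also have "\<dots> = 2 * real T" by (simp add: sum_distrib_right[symmetric] p_sum)
  finally show ?thesis .
qed

end

context det
begin

lemma total:
  assumes ed: "e = sqrt (real N / real T) / 48"
  shows "real N * (sqrt (real N * real T) / 288) \<le> (\<Sum>k<N. exp_regret N T \<pi> b1 (rhoK N e k))"
proof -
  have Tp: "0 < real T" using N3 NT by simp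
  have Np: "3 \<le> real N" using N3 by simp
  define E where "E k = (\<Sum>c\<in>L T. p c * nk k c)" for k
  define Q where "Q k = (\<Sum>c\<in>L T. q k c * nk k c)" for k
  define S where "S = (\<Sum>k<N. E k)"
  have S0: "0 \<le> S" unfolding S_def E_def using p_pos nk_bounds
    by (intro sum_nonneg mult_nonneg_nonneg) (auto simp: less_imp_le)
  have S2: "S \<le> 2 * real T" unfolding S_def E_def by (rule sumE0)
  have sT: "sqrt (real N / real T) * real T = sqrt (real N * real T)"
  proof -
    have "sqrt (real N / real T) * real T = sqrt (real N / real T) * sqrt ((real T)^2)" using Tp by simp
    also have "\<dots> = sqrt (real N / real T * (real T)^2)" by (rule real_sqrt_mult[symmetric])
    also have "real N / real T * (real T)^2 = real N * real T" using Tp by (simp add: power2_eq_square)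
    finally show ?thesis .
  qed
  have eT: "e * real T = sqrt (real N * real T) / 48" unfolding ed using sT by simp
  have e2T: "e^2 * real T = real N / 2304"
  proof -
    have "e^2 = (real N / real T) / 2304" unfolding ed by (simp add: power_divide)
    then show ?thesis using Tp by simp
  qed
  have reg: "e * (real T - Q k) \<le> exp_regret N T \<pi> b1 (rhoK N e k)" if "k < N" for k
    unfolding Q_def using regret_lower[OF that] .
  have Qb: "Q k \<le> (1 + 24 * real T * kap) * E k + real T / 24" for k
  proof -
    have "Q k \<le> E k + real T * (48 * kap * E k + 4/48) / 2"
      unfolding Q_def E_def by (rule Eq_bound) simp
    also have "\<dots> = (1 + 24 * real T * kap) * E k + real T / 24" by (simp add: algebra_simps)
    finally show ?thesis .
  qed
  have "(\<Sum>k<N. Q k) \<le> (\<Sum>k<N. (1 + 24 * real T * kap) * E k + real T / 24)"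
    by (intro sum_mono Qb)
  also have "\<dots> = (1 + 24 * real T * kap) * S + real N * real T / 24"
    unfolding S_def by (simp add: sum.distrib sum_distrib_left)
  finally have SQ: "(\<Sum>k<N. Q k) \<le> S + 24 * (real T * (kap * S)) + real N * real T / 24"
    by (simp add: algebra_simps)
  have "kap * S \<le> 6 * e^2 * S" using kap_le S0 by (intro mult_right_mono) auto
  also have "\<dots> \<le> 6 * e^2 * (2 * real T)" using S2 by (intro mult_left_mono) auto
  finally have "real T * (kap * S) \<le> real T * (6 * e^2 * (2 * real T))" using Tp by (intro mult_left_mono) auto
  also have "real T * (6 * e^2 * (2 * real T)) = 12 * (e^2 * real T) * real T" by (simp add: algebra_simps)
  also have "\<dots> = real N * real T / 192" unfolding e2T by simp
  finally have X: "real T * (kap * S) \<le> real N * real T / 192" .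
  have NT3: "3 * real T \<le> real N * real T" using Np Tp by (intro mult_right_mono) auto
  have SQ2: "(\<Sum>k<N. Q k) \<le> real N * real T - real N * real T / 6"
    using SQ X S2 NT3 by linarith
  have "(\<Sum>k<N. e * (real T - Q k)) = e * (real N * real T - (\<Sum>k<N. Q k))"
    by (simp add: sum_subtractf sum_distrib_left algebra_simps)
  also have "\<dots> \<ge> e * (real N * real T / 6)"
    using SQ2 e0 by (intro mult_left_mono) auto
  also have "e * (real N * real T / 6) = real N * (e * real T) / 6" by (simp add: algebra_simps)
  also have "\<dots> = real N * (sqrt (real N * real T) / 288)" unfolding eT by simp
  finally have A: "real N * (sqrt (real N * real T) / 288) \<le> (\<Sum>k<N. e * (real T - Q k))" .
  also have "\<dots> \<le> (\<Sum>k<N. exp_regret N T \<pi> b1 (rhoK N e k))"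
    by (intro sum_mono reg) auto
  finally show ?thesis .
qed

end

theorem theorem2:
  shows "\<exists>C>0. \<forall>(N::nat) (T::nat) (M::real measure) (A::real \<Rightarrow> policy).
    3 \<le> N \<and> N \<le> T \<and> prob_space M
    \<and> (\<forall>s t bs cs i. i < N \<longrightarrow> 0 \<le> A s t bs cs i \<and> A s t bs cs i \<le> 1)
    \<and> (\<forall>b \<rho>. (\<lambda>s. exp_regret N T (A s) b \<rho>) \<in> borel_measurable M)
    \<longrightarrow> (\<exists>b \<rho>. (\<forall>t<T. \<forall>i<N. 0 \<le> b t i \<and> b t i \<le> 1)
              \<and> (\<forall>i<N. 0 \<le> \<rho> i \<and> \<rho> i \<le> 1)
              \<and> (\<integral>s. exp_regret N T (A s) b \<rho> \<partial>M) \<ge> C * sqrt (real N * real T))"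
proof (intro exI[of _ "1/288"] conjI allI impI)
  show "(0::real) < 1/288" by simp
  fix N T :: nat and M :: "real measure" and A :: "real \<Rightarrow> policy"
  assume H: "3 \<le> N \<and> N \<le> T \<and> prob_space M
    \<and> (\<forall>s t bs cs i. i < N \<longrightarrow> 0 \<le> A s t bs cs i \<and> A s t bs cs i \<le> 1)
    \<and> (\<forall>b \<rho>. (\<lambda>s. exp_regret N T (A s) b \<rho>) \<in> borel_measurable M)"
  then have N3: "3 \<le> N" and NT: "N \<le> T" and PS: "prob_space M"
    and est: "\<And>s t bs cs i. i < N \<Longrightarrow> 0 \<le> A s t bs cs i \<and> A s t bs cs i \<le> 1"
    and meas: "\<And>b \<rho>. (\<lambda>s. exp_regret N T (A s) b \<rho>) \<in> borel_measurable M" by auto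
  interpret P: prob_space M by (rule PS)
  define e where "e = sqrt (real N / real T) / 48"
  have Tp: "0 < real T" "0 < real N" using N3 NT by auto
  have e0: "0 < e" unfolding e_def using Tp by simp
  have "real N / real T \<le> 1" using NT Tp by simp
  then have "sqrt (real N / real T) \<le> 1" by simp
  then have e1: "e \<le> 1/48" unfolding e_def by simp
  have D: "det N T (A s) e" for s
    using N3 NT e0 e1 est by unfold_locales auto
  define X where "X = sqrt (real N * real T) / 288"
  define f where "f k s = exp_regret N T (A s) b1 (rhoK N e k)" for k s
  have int: "integrable M (f k)" if "k < N" for k
  proof (rule P.integrable_const_bound[where B = "real T"])
    show "AE x in M. norm (f k x) \<le> real T"
      unfolding f_def using det.regret_abs[OF D that] by simp
    show "f k \<in> borel_measurable M" unfolding f_def by (rule meas)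
  qed
  have "real N * X \<le> (\<integral>s. (\<Sum>k<N. f k s) \<partial>M)"
  proof (rule P.integral_ge_const)
    show "integrable M (\<lambda>s. \<Sum>k<N. f k s)" by (rule Bochner_Integration.integrable_sum) (simp add: int)
    show "AE s in M. real N * X \<le> (\<Sum>k<N. f k s)"
      unfolding f_def X_def using det.total[OF D e_def] by simp
  qed
  also have "(\<integral>s. (\<Sum>k<N. f k s) \<partial>M) = (\<Sum>k<N. \<integral>s. f k s \<partial>M)"
    by (rule Bochner_Integration.integral_sum) (simp add: int)
  finally have SI: "real N * X \<le> (\<Sum>k<N. \<integral>s. f k s \<partial>M)" .
  have "\<exists>k<N. X \<le> (\<integral>s. f k s \<partial>M)"
  proof (rule ccontr)
    assume "\<not> (\<exists>k<N. X \<le> (\<integral>s. f k s \<partial>M))"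
    then have lt: "\<And>k. k \<in> {..<N} \<Longrightarrow> (\<integral>s. f k s \<partial>M) < X" by auto
    have "(\<Sum>k<N. \<integral>s. f k s \<partial>M) < (\<Sum>k<N. X)"
      using Tp by (intro sum_strict_mono lt) auto
    then show False using SI by simp
  qed
  then obtain k where k: "k < N" "X \<le> (\<integral>s. f k s \<partial>M)" by blast
  show "\<exists>b \<rho>. (\<forall>t<T. \<forall>i<N. 0 \<le> b t i \<and> b t i \<le> 1)
              \<and> (\<forall>i<N. 0 \<le> \<rho> i \<and> \<rho> i \<le> 1)
              \<and> (\<integral>s. exp_regret N T (A s) b \<rho> \<partial>M) \<ge> 1/288 * sqrt (real N * real T)"
  proof (intro exI[of _ b1] exI[of _ "rhoK N e k"] conjI allI impI)
    fix t i show "0 \<le> b1 t i" "b1 t i \<le> 1" by (simp_all add: b1_def)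
  next
    fix i show "0 \<le> rhoK N e k i" "rhoK N e k i \<le> 1" using e0 e1 by (simp_all add: rhoK_def)
  next
    show "1/288 * sqrt (real N * real T) \<le> (\<integral>s. exp_regret N T (A s) b1 (rhoK N e k) \<partial>M)"
      using k(2) unfolding X_def f_def by simp
  qed
qed

end
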